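(* Let $p\ge3$ be a prime, let $c_1,c_2\in(0,1/2]$, and let $D_1,D_2$ be probability distributions on $\mathbb{F}_p$ such that $D_i(x)\le1-c_i$ for all $x\in\mathbb{F}_p$ and $i=1,2$. Let $n_1,n_2$ be positive integers and let $b:\mathbb{F}_p^{n_1}\times\mathbb{F}_p^{n_2}\to\mathbb{F}_p$ be a bilinear form of rank $k$. Then for every $t\in\mathbb{F}_p^*$, \[|\mathrm{bias}_{t,(D_1,D_2)}b|\le 3\exp\!\Big(-\frac{c_1c_2\pi^2k}{2p^2\log(2ep/c_1)}\Big).\]
   Context: $\omega_p=\exp(2\pi i/p)$. $\mathrm{bias}_{t,(D_1,D_2)}b=\mathbb{E}_{x\sim D_1^{n_1},\,y\sim D_2^{n_2}}\omega_p^{t\,b(x,y)}$, where $D^n$ denotes the product distribution with independent coordinates distributed according to $D$. The rank of $b$ is the rank of its coefficient matrix. *)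

theory Defs
  imports "HOL-Analysis.Analysis" "Berlekamp_Zassenhaus.Finite_Field"
begin

text \<open>F_p is modelled as the type 'p mod_ring with 'p of class prime_card, so p = CARD('p).
 Vectors in F_p^n are 'p mod_ring ^ 'n for a finite index type 'n.\<close>

definition omega_pow :: "'p::prime_card mod_ring \<Rightarrow> complex" where
  "omega_pow a = cis (2 * pi * real_of_int (to_int_mod_ring a) / real CARD('p))"

definition bilin_form :: "'p::prime_card mod_ring ^ 'n2 ^ 'n1 \<Rightarrow>
    'p mod_ring ^ 'n1 \<Rightarrow> 'p mod_ring ^ 'n2 \<Rightarrow> 'p mod_ring" where
  "bilin_form A x y = (\<Sum>i\<in>UNIV. \<Sum>j\<in>UNIV. A $ i $ j * x $ i * y $ j)"

definition prod_dist :: "('p::prime_card mod_ring \<Rightarrow> real) \<Rightarrow> 'p mod_ring ^ 'n \<Rightarrow> real" where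
  "prod_dist D x = (\<Prod>i\<in>UNIV. D (x $ i))"

definition bias :: "'p::prime_card mod_ring \<Rightarrow> ('p mod_ring \<Rightarrow> real) \<Rightarrow> ('p mod_ring \<Rightarrow> real)
    \<Rightarrow> ('p mod_ring ^ 'n1 \<Rightarrow> 'p mod_ring ^ 'n2 \<Rightarrow> 'p mod_ring) \<Rightarrow> complex" where
  "bias t D1 D2 b = (\<Sum>x\<in>(UNIV :: ('p mod_ring ^ 'n1) set). \<Sum>y\<in>(UNIV :: ('p mod_ring ^ 'n2) set).
      complex_of_real (prod_dist D1 x * prod_dist D2 y) * omega_pow (t * b x y))"

definition is_distribution :: "('p::prime_card mod_ring \<Rightarrow> real) \<Rightarrow> bool" where
  "is_distribution D \<longleftrightarrow> (\<forall>a. 0 \<le> D a) \<and> (\<Sum>a\<in>UNIV. D a) = 1"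

end

theory Submission
  imports Defs
begin
lemma omega_pow_add: "omega_pow (a + b :: 'p::prime_card mod_ring) = omega_pow a * omega_pow b"
proof -
  define ra where "ra = to_int_mod_ring a"
  define rb where "rb = to_int_mod_ring b"
  define P where "P = int CARD('p)"
  have "to_int_mod_ring (a+b) = (ra + rb) mod P"
    using to_int_mod_ring_add[of a b] by (simp add: ra_def rb_def P_def)
  also have "\<dots> = ra + rb - P * ((ra + rb) div P)"
    by (simp add: minus_div_mult_eq_mod[symmetric] mult.commute)
  finally have e: "to_int_mod_ring (a+b) = ra + rb - P * ((ra + rb) div P)" .
  define q where "q = (ra + rb) div P"
  have Ppos: "real_of_int P > 0" unfolding P_def by simp
  have "2 * pi * real_of_int (to_int_mod_ring (a+b)) / real CARD('p)
      = 2 * pi * ra / real CARD('p) + 2 * pi * rb / real CARD('p) - 2 * pi * real_of_int q"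
    using Ppos unfolding e q_def[symmetric] by (simp add: P_def field_simps)
  then have "omega_pow (a+b) = cis ((2 * pi * ra / real CARD('p) + 2 * pi * rb / real CARD('p)) - 2 * pi * real_of_int q)"
    unfolding omega_pow_def by simp
  also have "\<dots> = cis (2 * pi * ra / real CARD('p) + 2 * pi * rb / real CARD('p)) / cis (2 * pi * real_of_int q)"
    by (simp only: cis_divide)
  also have "cis (2 * pi * real_of_int q) = 1"
    by (simp add: cis_multiple_2pi)
  finally show ?thesis unfolding omega_pow_def ra_def rb_def by (simp add: cis_mult)
qed

lemma omega_pow_zero[simp]: "omega_pow (0 :: 'p::prime_card mod_ring) = 1"
  unfolding omega_pow_def by simp

lemma omega_pow_sum: "finite S \<Longrightarrow> omega_pow (\<Sum>j\<in>S. f j :: 'p::prime_card mod_ring) = (\<Prod>j\<in>S. omega_pow (f j))"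
  by (induction S rule: finite_induct) (auto simp: omega_pow_add)

lemma cos_int_le:
  fixes r :: int and P :: nat
  assumes "P \<ge> 2" "r \<noteq> 0" "\<bar>r\<bar> < int P"
  shows "cos (2 * pi * real_of_int r / real P) \<le> cos (2 * pi / real P)"
proof -
  have key: "cos (2 * pi * real_of_int r / real P) \<le> cos (2 * pi / real P)" if r: "0 < r" "r < int P" for r :: int
  proof (cases "2 * r \<le> int P")
    case True
    show ?thesis
    proof (rule cos_monotone_0_pi_le)
      show "0 \<le> 2 * pi / real P" by simp
      have "1 \<le> real_of_int r" using r by simp
      then show "2 * pi / real P \<le> 2 * pi * real_of_int r / real P"
        using assms(1) by (simp add: divide_right_mono)
      have "real_of_int (2*r) \<le> real P" using True by linarith
      then have "2 * pi * real_of_int r \<le> pi * real P" by simp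
      then show "2 * pi * real_of_int r / real P \<le> pi" using assms(1) by (simp add: divide_le_eq mult.commute)
    qed
  next
    case False
    define r' where "r' = int P - r"
    have r': "0 < r'" "2 * r' \<le> int P" using False r unfolding r'_def by auto
    have "cos (2 * pi * real_of_int r / real P) = cos (2 * pi - 2 * pi * real_of_int r' / real P)"
      using assms(1) by (simp add: r'_def field_simps)
    also have "\<dots> = cos (2 * pi * real_of_int r' / real P)"
      by (simp add: cos_diff)
    also have "\<dots> \<le> cos (2 * pi / real P)"
    proof (rule cos_monotone_0_pi_le)
      show "0 \<le> 2 * pi / real P" by simp
      have "1 \<le> real_of_int r'" using r' by simp
      then show "2 * pi / real P \<le> 2 * pi * real_of_int r' / real P"
        using assms(1) by (simp add: divide_right_mono)
      have "real_of_int (2*r') \<le> real P" using r' by linarith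
      then have "2 * pi * real_of_int r' \<le> pi * real P" by simp
      then show "2 * pi * real_of_int r' / real P \<le> pi" using assms(1) by (simp add: divide_le_eq mult.commute)
    qed
    finally show ?thesis .
  qed
  show ?thesis
  proof (cases "r > 0")
    case True then show ?thesis using key assms by auto
  next
    case False
    then have "0 < -r" "-r < int P" using assms by auto
    from key[OF this] show ?thesis by simp
  qed
qed

lemma cnj_omega: "cnj (omega_pow a) = cis (- (2 * pi * real_of_int (to_int_mod_ring a) / real CARD('p)))"
  for a :: "'p::prime_card mod_ring"
  unfolding omega_pow_def by (simp add: cis_cnj)

lemma re_omega_cnj:
  fixes a b :: "'p::prime_card mod_ring"
  shows "Re (omega_pow a * cnj (omega_pow b)) = cos (2 * pi * real_of_int (to_int_mod_ring a - to_int_mod_ring b) / real CARD('p))"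
proof -
  have "omega_pow a * cnj (omega_pow b) = cis (2 * pi * real_of_int (to_int_mod_ring a) / real CARD('p) + - (2 * pi * real_of_int (to_int_mod_ring b) / real CARD('p)))"
    unfolding cnj_omega by (simp add: omega_pow_def cis_mult)
  then show ?thesis by (simp add: diff_divide_distrib right_diff_distrib)
qed

lemma term_bound:
  fixes a b s :: "'p::prime_card mod_ring"
  assumes "s \<noteq> 0"
  shows "Re (omega_pow (s*a) * cnj (omega_pow (s*b))) \<le> (if a = b then 1 else cos (2 * pi / real CARD('p)))"
proof (cases "a = b")
  case True then show ?thesis unfolding re_omega_cnj by simp
next
  case False
  have ne: "s * a \<noteq> s * b" using assms False by simp
  have "to_int_mod_ring (s*a) \<noteq> to_int_mod_ring (s*b)"
    using ne by (metis of_int_mod_ring_to_int_mod_ring)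
  moreover have "to_int_mod_ring (s*a) \<in> {0..<int CARD('p)}" "to_int_mod_ring (s*b) \<in> {0..<int CARD('p)}"
    using range_to_int_mod_ring by auto
  ultimately have "cos (2 * pi * real_of_int (to_int_mod_ring (s*a) - to_int_mod_ring (s*b)) / real CARD('p))
     \<le> cos (2 * pi / real CARD('p))"
    by (intro cos_int_le) (auto simp: prime_ge_2_nat[OF prime_card])
  then show ?thesis using False unfolding re_omega_cnj by simp
qed

lemma phi_bound:
  fixes D :: "'p::prime_card mod_ring \<Rightarrow> real" and s :: "'p mod_ring"
  assumes D: "is_distribution D" and Dc: "\<forall>a. D a \<le> 1 - c" and s: "s \<noteq> 0"
  shows "(cmod (\<Sum>a\<in>UNIV. complex_of_real (D a) * omega_pow (s*a)))^2 \<le> 1 - c * (1 - cos (2 * pi / real CARD('p)))"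
proof -
  define C where "C = cos (2 * pi / real CARD('p))"
  define \<phi> where "\<phi> = (\<Sum>a\<in>UNIV. complex_of_real (D a) * omega_pow (s*a))"
  have D0: "\<And>a. D a \<ge> 0" and D1: "(\<Sum>a\<in>UNIV. D a) = 1" using D unfolding is_distribution_def by auto
  have "complex_of_real ((cmod \<phi>)^2) = \<phi> * cnj \<phi>"
    by (metis complex_norm_square of_real_power)
  also have "\<dots> = (\<Sum>a\<in>UNIV. \<Sum>b\<in>UNIV. complex_of_real (D a * D b) * (omega_pow (s*a) * cnj (omega_pow (s*b))))"
    unfolding \<phi>_def by (simp add: sum_distrib_left sum_distrib_right mult_ac, subst sum.swap, simp add: mult_ac)
  finally have "(cmod \<phi>)^2 = Re (\<Sum>a\<in>UNIV. \<Sum>b\<in>UNIV. complex_of_real (D a * D b) * (omega_pow (s*a) * cnj (omega_pow (s*b))))"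
    by (metis Re_complex_of_real)
  also have "\<dots> = (\<Sum>a\<in>UNIV. \<Sum>b\<in>UNIV. (D a * D b) * Re (omega_pow (s*a) * cnj (omega_pow (s*b))))"
    by (simp add: Re_sum)
  also have "\<dots> \<le> (\<Sum>a\<in>UNIV. \<Sum>b\<in>UNIV. (D a * D b) * (if a = b then 1 else C))"
    unfolding C_def
    by (intro sum_mono mult_left_mono term_bound[OF s]) (auto simp: D0)
  also have "\<dots> = (\<Sum>a\<in>UNIV. D a * (C + (1 - C) * D a))"
  proof (intro sum.cong refl)
    fix a
    have "(\<Sum>b\<in>UNIV. (D a * D b) * (if a = b then 1 else C)) = D a * (\<Sum>b\<in>UNIV. C * D b + (if a = b then (1 - C) * D b else 0))"
      by (simp add: sum_distrib_left) (intro sum.cong refl, auto simp: algebra_simps)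
    also have "\<dots> = D a * (C + (1 - C) * D a)"
      by (simp add: sum.distrib sum_distrib_left[symmetric] D1)
    finally show "(\<Sum>b\<in>UNIV. (D a * D b) * (if a = b then 1 else C)) = D a * (C + (1 - C) * D a)" .
  qed
  also have "\<dots> = (\<Sum>a\<in>UNIV. C * D a + (1 - C) * (D a * D a))"
    by (intro sum.cong) (auto simp: algebra_simps)
  also have "\<dots> = C * (\<Sum>a\<in>UNIV. D a) + (1 - C) * (\<Sum>a\<in>UNIV. D a * D a)"
    by (simp add: sum.distrib sum_distrib_left)
  also have "\<dots> = C + (1 - C) * (\<Sum>a\<in>UNIV. D a * D a)"
    by (simp add: D1)
  also have "\<dots> \<le> C + (1 - C) * (1 - c)"
  proof -
    have "(\<Sum>a\<in>UNIV. D a * D a) \<le> (\<Sum>a\<in>UNIV. D a * (1 - c))"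
      by (intro sum_mono mult_left_mono) (auto simp: D0 Dc)
    also have "\<dots> = 1 - c" by (simp add: sum_distrib_right[symmetric] D1)
    finally show ?thesis using cos_le_one[of "2 * pi / real CARD('p)"] unfolding C_def
      by (intro add_left_mono mult_left_mono) auto
  qed
  also have "\<dots> = 1 - c * (1 - C)" by (simp add: algebra_simps)
  finally show ?thesis unfolding \<phi>_def C_def .
qed

definition Lsum :: "'i set \<Rightarrow> ('i \<Rightarrow> 'a::field ^ 'n) \<Rightarrow> ('i \<Rightarrow> 'a) \<Rightarrow> 'a ^ 'n" where
  "Lsum I r f = (\<Sum>i\<in>I. f i *s r i)"

definition Sp :: "'i set \<Rightarrow> ('i \<Rightarrow> 'a::field ^ 'n) \<Rightarrow> ('a ^ 'n) set" where
  "Sp I r = range (Lsum I r)"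

definition Pr :: "('a \<Rightarrow> real) \<Rightarrow> 'i set \<Rightarrow> ('i \<Rightarrow> 'a::field ^ 'n) \<Rightarrow> 'a ^ 'n \<Rightarrow> real" where
  "Pr D I r v = (\<Sum>f\<in>PiE I (\<lambda>_. UNIV). (\<Prod>i\<in>I. D (f i)) * (if Lsum I r f = v then 1 else 0))"

lemma Lsum_add: "Lsum I r f + Lsum I r g = Lsum I r (\<lambda>j. f j + g j)"
  unfolding Lsum_def by (simp add: vec_eq_iff sum_component sum.distrib algebra_simps)

lemma Lsum_diff: "Lsum I r f - Lsum I r g = Lsum I r (\<lambda>j. f j - g j)"
  unfolding Lsum_def by (simp add: vec_eq_iff sum_component sum_subtractf algebra_simps)

lemma Lsum_scale: "c *s Lsum I r f = Lsum I r (\<lambda>j. c * f j)"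
  unfolding Lsum_def by (simp add: vec_eq_iff sum_component sum_distrib_left algebra_simps)

lemma Lsum_insert: "finite I \<Longrightarrow> i \<notin> I \<Longrightarrow> Lsum (insert i I) r f = f i *s r i + Lsum I r f"
  unfolding Lsum_def by simp

lemma Lsum_cong: "(\<And>j. j \<in> I \<Longrightarrow> f j = g j) \<Longrightarrow> Lsum I r f = Lsum I r g"
  unfolding Lsum_def by (intro sum.cong) auto

lemma Sp_diff: "w \<in> Sp I r \<Longrightarrow> w' \<in> Sp I r \<Longrightarrow> w - w' \<in> Sp I r"
  unfolding Sp_def by (auto simp: Lsum_diff)

lemma Sp_add: "w \<in> Sp I r \<Longrightarrow> w' \<in> Sp I r \<Longrightarrow> w + w' \<in> Sp I r"
  unfolding Sp_def by (auto simp: Lsum_add)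

lemma Sp_scale: "w \<in> Sp I r \<Longrightarrow> c *s w \<in> Sp I r"
  unfolding Sp_def by (auto simp: Lsum_scale)

lemma Sp_finite: "finite (Sp I (r :: 'i \<Rightarrow> 'a::{field,finite} ^ 'n))"
  by simp

lemma Sp_insert_in:
  assumes "finite I" "i \<notin> I" "r i \<in> Sp I r"
  shows "Sp (insert i I) r = Sp I r"
proof
  show "Sp (insert i I) r \<subseteq> Sp I r"
  proof
    fix w assume "w \<in> Sp (insert i I) r"
    then obtain f where "w = Lsum (insert i I) r f" unfolding Sp_def by auto
    then have "w = f i *s r i + Lsum I r f" using assms by (simp add: Lsum_insert)
    moreover have "Lsum I r f \<in> Sp I r" unfolding Sp_def by auto
    ultimately show "w \<in> Sp I r" using assms(3) by (simp add: Sp_add Sp_scale)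
  qed
next
  show "Sp I r \<subseteq> Sp (insert i I) r"
  proof
    fix w assume "w \<in> Sp I r"
    then obtain f where f: "w = Lsum I r f" unfolding Sp_def by auto
    have "Lsum (insert i I) r (f(i := 0)) = Lsum I r (f(i:=0))" using assms by (simp add: Lsum_insert)
    also have "\<dots> = w" unfolding f using assms by (intro Lsum_cong) auto
    finally show "w \<in> Sp (insert i I) r" unfolding Sp_def by (metis rangeI)
  qed
qed

lemma Sp_insert_notin:
  fixes r :: "'i \<Rightarrow> 'a::{field,finite} ^ 'n"
  assumes "finite I" "i \<notin> I" "r i \<notin> Sp I r"
  shows "card (Sp (insert i I) r) = CARD('a) * card (Sp I r)"
    and "\<And>a a' v. v - a *s r i \<in> Sp I r \<Longrightarrow> v - a' *s r i \<in> Sp I r \<Longrightarrow> a = a'"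
proof -
  have uniq: "a = a'" if "a *s r i + w = a' *s r i + w'" "w \<in> Sp I r" "w' \<in> Sp I r" for a a' w w'
  proof (rule ccontr)
    assume ne: "a \<noteq> a'"
    have "(a - a') *s r i = w' - w" using that(1)
      by (simp add: vec_eq_iff algebra_simps)
    then have "inverse (a - a') *s ((a - a') *s r i) = inverse (a - a') *s (w' - w)" by simp
    then have "(inverse (a - a') * (a - a')) *s r i = inverse (a - a') *s (w' - w)"
      by (simp only: vector_smult_assoc)
    moreover have "inverse (a - a') * (a - a') = 1" using ne by simp
    ultimately have "r i = inverse (a - a') *s (w' - w)" by simp
    then have "r i \<in> Sp I r" using that by (simp add: Sp_scale Sp_diff)
    then show False using assms by simp
  qed
  show "\<And>a a' v. v - a *s r i \<in> Sp I r \<Longrightarrow> v - a' *s r i \<in> Sp I r \<Longrightarrow> a = a'"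
  proof -
    fix a a' v assume h: "v - a *s r i \<in> Sp I r" "v - a' *s r i \<in> Sp I r"
    have "a *s r i + (v - a *s r i) = a' *s r i + (v - a' *s r i)" by simp
    from uniq[OF this h] show "a = a'" .
  qed
  have eq: "Sp (insert i I) r = (\<lambda>(a, w). a *s r i + w) ` (UNIV \<times> Sp I r)"
  proof
    show "Sp (insert i I) r \<subseteq> (\<lambda>(a, w). a *s r i + w) ` (UNIV \<times> Sp I r)"
    proof
      fix w assume "w \<in> Sp (insert i I) r"
      then obtain f where "w = Lsum (insert i I) r f" unfolding Sp_def by auto
      then have "w = f i *s r i + Lsum I r f" using assms by (simp add: Lsum_insert)
      moreover have "Lsum I r f \<in> Sp I r" unfolding Sp_def by auto
      ultimately show "w \<in> (\<lambda>(a, w). a *s r i + w) ` (UNIV \<times> Sp I r)" by auto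
    qed
  next
    show "(\<lambda>(a, w). a *s r i + w) ` (UNIV \<times> Sp I r) \<subseteq> Sp (insert i I) r"
    proof
      fix x assume "x \<in> (\<lambda>(a, w). a *s r i + w) ` (UNIV \<times> Sp I r)"
      then obtain a w where x: "x = a *s r i + w" and w: "w \<in> Sp I r" by auto
      then obtain f where wf: "w = Lsum I r f" unfolding Sp_def by auto
      have "Lsum (insert i I) r (f(i := a)) = a *s r i + Lsum I r (f(i:=a))" using assms by (simp add: Lsum_insert)
      also have "Lsum I r (f(i:=a)) = Lsum I r f" using assms by (intro Lsum_cong) auto
      finally show "x \<in> Sp (insert i I) r" unfolding Sp_def x wf by (metis rangeI)
    qed
  qed
  have inj: "inj_on (\<lambda>(a, w). a *s r i + w) (UNIV \<times> Sp I r)"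
  proof (rule inj_onI, clarify)
    fix a w a' w' assume h: "w \<in> Sp I r" "w' \<in> Sp I r" "a *s r i + w = a' *s r i + w'"
    then have "a = a'" using uniq by blast
    with h show "a = a' \<and> w = w'" by simp
  qed
  show "card (Sp (insert i I) r) = CARD('a) * card (Sp I r)"
    unfolding eq by (subst card_image[OF inj]) (simp add: card_cartesian_product)
qed

lemma Lsum_upd: "i \<notin> I \<Longrightarrow> Lsum I r (g(i:=y)) = Lsum I r g"
  by (intro Lsum_cong) auto

lemma prod_upd: "i \<notin> I \<Longrightarrow> (\<Prod>j\<in>I. D ((g(i:=y)) j)) = (\<Prod>j\<in>I. D (g j))"
  by (intro prod.cong) auto

lemma prod_if_upd: "i \<notin> I \<Longrightarrow> (\<Prod>j\<in>I. D (if j = i then y else g j)) = (\<Prod>j\<in>I. D (g j))"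
  by (intro prod.cong) auto

lemma Pr_nonneg: "(\<And>a. D a \<ge> 0) \<Longrightarrow> Pr D I r v \<ge> 0"
  unfolding Pr_def by (intro sum_nonneg mult_nonneg_nonneg prod_nonneg) auto

lemma Pr_zero: "v \<notin> Sp I r \<Longrightarrow> Pr D I r v = 0"
  unfolding Pr_def Sp_def by (intro sum.neutral) auto

lemma Pr_empty: "Pr D {} r v \<le> 1"
  unfolding Pr_def by simp

lemma Pr_insert:
  fixes r :: "'i \<Rightarrow> 'a::{field,finite} ^ 'n"
  assumes "finite I" "i \<notin> I"
  shows "Pr D (insert i I) r v = (\<Sum>a\<in>UNIV. D a * Pr D I r (v - a *s r i))"
proof -
  have eqv: "(a *s r i + L = v) = (L = v - a *s r i)" for a L
    by (auto simp: algebra_simps)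
  have "Pr D (insert i I) r v = (\<Sum>(a,g)\<in>UNIV \<times> PiE I (\<lambda>_. UNIV). D a * ((\<Prod>j\<in>I. D (g j)) * (if Lsum I r g = v - a *s r i then 1 else 0)))"
    unfolding Pr_def
    by (rule sum.reindex_bij_witness[of _ "\<lambda>(y,g). g(i := y)" "\<lambda>g. (g i, g(i := undefined))"])
       (use assms in \<open>auto simp: PiE_def extensional_def Lsum_insert Lsum_upd prod_upd prod_if_upd eqv\<close>)
  also have "\<dots> = (\<Sum>a\<in>UNIV. \<Sum>g\<in>PiE I (\<lambda>_. UNIV). D a * ((\<Prod>j\<in>I. D (g j)) * (if Lsum I r g = v - a *s r i then 1 else 0)))"
    by (subst sum.cartesian_product) auto
  also have "\<dots> = (\<Sum>a\<in>UNIV. D a * Pr D I r (v - a *s r i))"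
    unfolding Pr_def by (simp add: sum_distrib_left)
  finally show ?thesis .
qed

lemma Sp_empty: "Sp {} r = {0}"
  unfolding Sp_def Lsum_def by auto

lemma zero_in_Sp: "0 \<in> Sp I r"
proof -
  have "Lsum I r (\<lambda>_. 0) = 0" unfolding Lsum_def by simp
  then show ?thesis unfolding Sp_def by (metis rangeI)
qed

lemma fiber_bound:
  fixes r :: "'i \<Rightarrow> 'a::{field,finite} ^ 'n" and D :: "'a \<Rightarrow> real"
  assumes fin: "finite I" and D0: "\<forall>a. D a \<ge> 0" and D1: "(\<Sum>a\<in>UNIV. D a) = 1"
    and Dc: "\<forall>a. D a \<le> 1 - c" and card2: "CARD('a) \<ge> 2"
  shows "card (Sp I r) = CARD('a)^k \<Longrightarrow> Pr D I r v \<le> (1-c)^k"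
  using fin
proof (induction I arbitrary: k v rule: finite_induct)
  case empty
  then have "CARD('a)^k = 1" by (simp add: Sp_empty)
  then have "k = 0"
  proof (rule contrapos_pp)
    assume "k \<noteq> 0"
    then have "1 < CARD('a)^k" using card2 by (intro one_less_power) auto
    then show "CARD('a)^k \<noteq> 1" by linarith
  qed
  then show ?case using Pr_empty by simp
next
  case (insert i I)
  have c1: "1 - c \<ge> 0" using D0 Dc by (meson order_trans)
  show ?case
  proof (cases "r i \<in> Sp I r")
    case True
    then have "card (Sp I r) = CARD('a)^k" using Sp_insert_in[OF insert(1,2) True] insert.prems by simp
    then have IH: "\<And>w. Pr D I r w \<le> (1-c)^k" using insert.IH by blast
    have "Pr D (insert i I) r v = (\<Sum>a\<in>UNIV. D a * Pr D I r (v - a *s r i))"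
      using insert by (simp add: Pr_insert)
    also have "\<dots> \<le> (\<Sum>a\<in>UNIV. D a * (1-c)^k)"
      by (intro sum_mono mult_left_mono IH) (use D0 in auto)
    also have "\<dots> = (1-c)^k" by (simp add: sum_distrib_right[symmetric] D1)
    finally show ?thesis .
  next
    case False
    have cardeq: "CARD('a) * card (Sp I r) = CARD('a)^k"
      using Sp_insert_notin(1)[OF insert(1,2) False] insert.prems by simp
    have "card (Sp I r) \<ge> 1"
      using zero_in_Sp[of I r] card_gt_0_iff[of "Sp I r"] by fastforce
    then have "k \<noteq> 0"
    proof (intro notI)
      assume "card (Sp I r) \<ge> 1" "k = 0"
      then have "2 * 1 \<le> CARD('a) * card (Sp I r)" using card2 by (intro mult_le_mono) auto
      then show False using cardeq \<open>k = 0\<close> by simp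
    qed
    then obtain k' where k': "k = Suc k'" by (cases k) auto
    have "card (Sp I r) = CARD('a)^k'" using cardeq k' card2 by simp
    then have IH: "\<And>w. Pr D I r w \<le> (1-c)^k'" using insert.IH by blast
    have PrI: "Pr D (insert i I) r v = (\<Sum>a\<in>UNIV. D a * Pr D I r (v - a *s r i))"
      using insert by (simp add: Pr_insert)
    show ?thesis
    proof (cases "\<exists>a0. v - a0 *s r i \<in> Sp I r")
      case True
      then obtain a0 where a0: "v - a0 *s r i \<in> Sp I r" by blast
      have z: "D a * Pr D I r (v - a *s r i) = 0" if "a \<noteq> a0" for a
      proof -
        have "v - a *s r i \<notin> Sp I r"
          using Sp_insert_notin(2)[OF insert(1,2) False _ a0] that by blast
        then show ?thesis by (simp add: Pr_zero)
      qed
      have "(\<Sum>a\<in>UNIV. D a * Pr D I r (v - a *s r i)) = D a0 * Pr D I r (v - a0 *s r i)"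
        by (subst sum.remove[of _ a0]) (auto simp: z intro!: sum.neutral)
      also have "\<dots> \<le> (1 - c) * (1-c)^k'"
        by (intro mult_mono IH) (use D0 Dc c1 Pr_nonneg[of D] in auto)
      finally show ?thesis using PrI k' by simp
    next
      case False
      then have "(\<Sum>a\<in>UNIV. D a * Pr D I r (v - a *s r i)) = 0"
        by (intro sum.neutral) (auto simp: Pr_zero)
      then show ?thesis using PrI c1 by simp
    qed
  qed
qed

definition proj :: "'n set \<Rightarrow> 'a::zero ^ 'n \<Rightarrow> 'a ^ 'n" where
  "proj J v = (\<chi> j. if j \<in> J then v $ j else 0)"

definition wt :: "'n set \<Rightarrow> 'a::zero ^ 'n \<Rightarrow> nat" where
  "wt J v = card {j \<in> J. v $ j \<noteq> 0}"

lemma proj_proj_insert: "proj J (proj (insert j J) v) = proj J v"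
  unfolding proj_def by (simp add: vec_eq_iff)

lemma wt_proj: "wt J (proj J v) = wt J v"
  unfolding wt_def proj_def by (auto intro!: arg_cong[where f=card])

lemma proj_diff: "proj J (v - w) = proj J v - proj J w" for v w :: "'a::field ^ 'n"
  unfolding proj_def by (simp add: vec_eq_iff)

lemma proj_insert_split: "j \<notin> J \<Longrightarrow> proj (insert j J) v = proj J v + (v $ j) *s axis j 1"
  for v :: "'a::field ^ 'n"
  unfolding proj_def by (auto simp: vec_eq_iff axis_def)

lemma wt_mono_insert: "finite J \<Longrightarrow> wt J v \<le> wt (insert j J) v"
  unfolding wt_def by (intro card_mono) auto

lemma sum_if_zero:
  fixes u :: real
  shows "(\<Sum>a\<in>(UNIV :: 'a::{zero,finite} set). (if a = 0 then 1 else u)) = 1 + (real CARD('a) - 1) * u"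
proof -
  have "(\<Sum>a\<in>(UNIV :: 'a set). (if a = 0 then 1 else u)) = (\<Sum>a\<in>(UNIV :: 'a set). u + (if a = 0 then 1 - u else 0))"
    by (intro sum.cong) auto
  also have "\<dots> = real CARD('a) * u + (1 - u)"
    by (simp add: sum.distrib)
  finally show ?thesis by (simp add: algebra_simps)
qed

lemma weight_enum:
  fixes V :: "('a::{field,finite} ^ 'n) set" and u :: real
  assumes V0: "0 \<in> V" and Vadd: "\<And>x y. x \<in> V \<Longrightarrow> y \<in> V \<Longrightarrow> x + y \<in> V"
    and Vscale: "\<And>c x. x \<in> V \<Longrightarrow> c *s x \<in> V"
    and u0: "0 \<le> u" and u1: "u \<le> 1" and card2: "CARD('a) \<ge> 2"
    and fin: "finite J"
  shows "card (proj J ` V) = CARD('a)^k \<Longrightarrow>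
    (\<Sum>w\<in>proj J ` V. u ^ wt J w) \<le> (1 + (real CARD('a) - 1) * u) ^ k"
  using fin
proof (induction J arbitrary: k rule: finite_induct)
  case empty
  have "proj {} ` V = {0}" using V0 unfolding proj_def by (auto simp: vec_eq_iff)
  then have "CARD('a)^k = 1" using empty by simp
  then have "k = 0"
  proof (rule contrapos_pp)
    assume "k \<noteq> 0"
    then have "1 < CARD('a)^k" using card2 by (intro one_less_power) auto
    then show "CARD('a)^k \<noteq> 1" by linarith
  qed
  then show ?case using \<open>proj {} ` V = {0}\<close> by (simp add: wt_def)
next
  case (insert j J)
  define W' where "W' = proj (insert j J) ` V"
  define W where "W = proj J ` V"
  define B where "B = 1 + (real CARD('a) - 1) * u"
  have B0: "B \<ge> 0" using u0 card2 unfolding B_def by simp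
  have Vdiff: "x - y \<in> V" if "x \<in> V" "y \<in> V" for x y
  proof -
    have "x + (-1) *s y \<in> V" using that Vadd Vscale by blast
    then show ?thesis by (simp add: vec_eq_iff)
  qed
  show ?case
  proof (cases "\<exists>v0\<in>V. proj J v0 = 0 \<and> v0 $ j \<noteq> 0")
    case False
    have img: "proj J ` W' = W" unfolding W'_def W_def image_comp o_def proj_proj_insert ..
    have inj: "inj_on (proj J) W'"
    proof (rule inj_onI)
      fix w1 w2 assume "w1 \<in> W'" "w2 \<in> W'" and eq: "proj J w1 = proj J w2"
      then obtain v1 v2 where v: "v1 \<in> V" "v2 \<in> V" "w1 = proj (insert j J) v1" "w2 = proj (insert j J) v2"
        unfolding W'_def by auto
      have pj: "proj J v1 = proj J v2" using eq v(3,4) by (simp add: proj_proj_insert)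
      then have "proj J (v1 - v2) = 0" by (simp add: proj_diff)
      then have "(v1 - v2) $ j = 0" using False Vdiff[OF v(1,2)] by blast
      then show "w1 = w2" using pj v(3,4) insert(2) by (simp add: proj_insert_split)
    qed
    have "card W = card W'" using card_image[OF inj] img by simp
    then have cW: "card W = CARD('a)^k" using insert.prems unfolding W'_def by simp
    have "(\<Sum>w\<in>W'. u ^ wt (insert j J) w) \<le> (\<Sum>w\<in>W'. u ^ wt J (proj J w))"
      by (intro sum_mono power_decreasing) (use u0 u1 wt_mono_insert[OF insert(1)] in \<open>auto simp: wt_proj\<close>)
    also have "\<dots> = (\<Sum>w\<in>W. u ^ wt J w)"
      using sum.reindex[OF inj, of "\<lambda>w. u ^ wt J w"] img by simp
    also have "\<dots> \<le> B ^ k" using insert.IH cW unfolding W_def B_def by simp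
    finally show ?thesis unfolding W'_def B_def .
  next
    case True
    then obtain v0 where v0: "v0 \<in> V" "proj J v0 = 0" "v0 $ j \<noteq> 0" by blast
    define e :: "'a ^ 'n" where "e = axis j 1"
    have v0J: "v0 $ j' = 0" if "j' \<in> J" for j'
    proof -
      have "(proj J v0) $ j' = 0" using v0(2) by simp
      then show ?thesis using that unfolding proj_def by simp
    qed
    have Wj: "w $ j = 0" if "w \<in> W" for w using that insert(2) unfolding W_def proj_def by auto
    have eqW: "W' = (\<lambda>(w, a). w + a *s e) ` (W \<times> UNIV)"
    proof
      show "W' \<subseteq> (\<lambda>(w, a). w + a *s e) ` (W \<times> UNIV)"
      proof
        fix x assume "x \<in> W'"
        then obtain v where v: "v \<in> V" "x = proj (insert j J) v" unfolding W'_def by auto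
        have "x = proj J v + (v $ j) *s e"
          unfolding v(2) e_def proj_def using insert(2) by (auto simp: vec_eq_iff axis_def)
        moreover have "proj J v \<in> W" unfolding W_def using v by auto
        ultimately show "x \<in> (\<lambda>(w, a). w + a *s e) ` (W \<times> UNIV)" by auto
      qed
    next
      show "(\<lambda>(w, a). w + a *s e) ` (W \<times> UNIV) \<subseteq> W'"
      proof
        fix x assume "x \<in> (\<lambda>(w, a). w + a *s e) ` (W \<times> UNIV)"
        then obtain v a where v: "v \<in> V" "x = proj J v + a *s e" unfolding W_def by auto
        define v' where "v' = v + ((a - v $ j) * inverse (v0 $ j)) *s v0"
        have "v' \<in> V" unfolding v'_def using v(1) v0(1) Vadd Vscale by blast
        moreover have "x = proj (insert j J) v'"
          unfolding v(2) v'_def e_def proj_def using insert(2) v0(3) v0J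
          by (auto simp: vec_eq_iff axis_def mult.assoc)
        ultimately show "x \<in> W'" unfolding W'_def by auto
      qed
    qed
    have inj: "inj_on (\<lambda>(w, a). w + a *s e) (W \<times> UNIV)"
    proof (rule inj_onI, clarify)
      fix w a w' a' assume h: "w \<in> W" "w' \<in> W" "w + a *s e = w' + a' *s e"
      have "(w + a *s e) $ j = a" using Wj[OF h(1)] by (simp add: e_def)
      moreover have "(w' + a' *s e) $ j = a'" using Wj[OF h(2)] by (simp add: e_def)
      ultimately have "a = a'" using h(3) by simp
      then show "w = w' \<and> a = a'" using h(3) by simp
    qed
    have "card W' = card W * CARD('a)"
      unfolding eqW by (subst card_image[OF inj]) (simp add: card_cartesian_product)
    then have cardeq: "card W * CARD('a) = CARD('a)^k" using insert.prems unfolding W'_def by simp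
    have "card W \<ge> 1" using V0 card_gt_0_iff[of W] unfolding W_def by fastforce
    then have "k \<noteq> 0"
    proof (intro notI)
      assume "card W \<ge> 1" "k = 0"
      then have "1 * 2 \<le> card W * CARD('a)" using card2 by (intro mult_le_mono) auto
      then show False using cardeq \<open>k = 0\<close> by simp
    qed
    then obtain k' where k': "k = Suc k'" by (cases k) auto
    have cW: "card W = CARD('a)^k'" using cardeq k' card2 by simp
    have wt_e: "wt (insert j J) (w + a *s e) = wt J w + (if a = 0 then 0 else 1)" if "w \<in> W" for w a
    proof -
      have "{j' \<in> insert j J. (w + a *s e) $ j' \<noteq> 0} =
          (if a = 0 then {j' \<in> J. w $ j' \<noteq> 0} else insert j {j' \<in> J. w $ j' \<noteq> 0})"
        using Wj[OF that] insert(2) by (auto simp: e_def axis_def)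
      then show ?thesis unfolding wt_def using insert(1,2) by simp
    qed
    have "(\<Sum>x\<in>W'. u ^ wt (insert j J) x) = (\<Sum>(w, a)\<in>W \<times> UNIV. u ^ wt (insert j J) (w + a *s e))"
      unfolding eqW by (subst sum.reindex[OF inj]) (simp add: case_prod_beta)
    also have "\<dots> = (\<Sum>w\<in>W. \<Sum>a\<in>UNIV. u ^ wt (insert j J) (w + a *s e))"
      by (subst sum.cartesian_product) simp
    also have "\<dots> = (\<Sum>w\<in>W. u ^ wt J w * (\<Sum>a\<in>(UNIV :: 'a set). (if a = 0 then 1 else u)))"
      by (intro sum.cong refl) (auto simp: wt_e sum_distrib_left power_add intro!: sum.cong)
    also have "\<dots> = B * (\<Sum>w\<in>W. u ^ wt J w)"
      by (simp add: sum_if_zero B_def sum_distrib_right mult.commute)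
    also have "\<dots> \<le> B * B ^ k'"
      using insert.IH cW B0 unfolding W_def B_def by (intro mult_left_mono) auto
    finally show ?thesis unfolding W'_def B_def k' by simp
  qed
qed

lemma card_span_indep:
  fixes B :: "('a::{field,finite} ^ 'n) set"
  assumes ind: "vec.independent B"
  shows "card (vec.span B) = CARD('a) ^ card B"
proof -
  have finB: "finite B" by simp
  define L where "L = (\<lambda>u. \<Sum>v\<in>B. u v *s v)"
  have sp: "vec.span B = L ` (PiE B (\<lambda>_. UNIV))"
  proof -
    have "vec.span B = range L" unfolding L_def using vec.span_finite[OF finB] .
    also have "range L = L ` (PiE B (\<lambda>_. UNIV))"
    proof
      show "range L \<subseteq> L ` (PiE B (\<lambda>_. UNIV))"
      proof
        fix x assume "x \<in> range L"
        then obtain u where x: "x = L u" by auto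
        have "L (restrict u B) = L u" unfolding L_def by (intro sum.cong) auto
        moreover have "restrict u B \<in> PiE B (\<lambda>_. UNIV)" by simp
        ultimately show "x \<in> L ` (PiE B (\<lambda>_. UNIV))" using x by (metis image_eqI)
      qed
    qed auto
    finally show ?thesis .
  qed
  have inj: "inj_on L (PiE B (\<lambda>_. UNIV))"
  proof (rule inj_onI)
    fix u u' assume u: "u \<in> PiE B (\<lambda>_. UNIV)" and u': "u' \<in> PiE B (\<lambda>_. UNIV)" and eq: "L u = L u'"
    have "(\<Sum>v\<in>B. (u v - u' v) *s v) = L u - L u'"
      unfolding L_def by (simp add: vec_eq_iff sum_component sum_subtractf algebra_simps)
    also have "\<dots> = 0" using eq by simp
    finally have z: "(\<Sum>v\<in>B. (u v - u' v) *s v) = 0" .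
    have nd: "\<not> vec.dependent B" using ind by simp
    have nd2: "\<not> (\<exists>w. (\<exists>v\<in>B. w v \<noteq> 0) \<and> (\<Sum>v\<in>B. w v *s v) = 0)"
      using nd vec.dependent_finite[OF finB] by simp
    have "\<not> ((\<exists>v\<in>B. u v - u' v \<noteq> 0) \<and> (\<Sum>v\<in>B. (u v - u' v) *s v) = 0)"
      using nd2 by (rule contrapos_nn) (rule exI)
    then have "\<forall>v\<in>B. u v - u' v = 0" using z by simp
    then show "u = u'" using u u' by (intro PiE_ext) auto
  qed
  have "card (vec.span B) = card (PiE B (\<lambda>_. UNIV :: 'a set))"
    unfolding sp by (rule card_image[OF inj])
  also have "\<dots> = CARD('a) ^ card B" by (simp add: card_PiE finB)
  finally show ?thesis .
qed

lemma card_span_dim: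
  fixes S :: "('a::{field,finite} ^ 'n) set"
  shows "card (vec.span S) = CARD('a) ^ vec.dim S"
proof -
  obtain B where B: "B \<subseteq> S" "vec.independent B" "S \<subseteq> vec.span B" "card B = vec.dim S"
    using vec.basis_exists[of S] by metis
  have "vec.span S = vec.span B"
  proof
    show "vec.span S \<subseteq> vec.span B" using B(3) by (intro vec.span_minimal) auto
    show "vec.span B \<subseteq> vec.span S" using B(1) by (rule vec.span_mono)
  qed
  then show ?thesis using card_span_indep[OF B(2)] B(4) by simp
qed

lemma Sp_rows:
  fixes A :: "'a::field ^ 'n2 ^ 'n1"
  shows "Sp UNIV (\<lambda>i. A $ i) = vec.span (rows A)"
proof
  show "Sp UNIV (\<lambda>i. A $ i) \<subseteq> vec.span (rows A)"
  proof
    fix x assume "x \<in> Sp UNIV (\<lambda>i. A $ i)"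
    then obtain f where x: "x = (\<Sum>i\<in>UNIV. f i *s A $ i)" unfolding Sp_def Lsum_def by auto
    have "A $ i \<in> rows A" for i unfolding rows_def row_def by (auto simp: vec_lambda_eta)
    then show "x \<in> vec.span (rows A)" unfolding x
      by (intro vec.span_sum vec.span_scale vec.span_base) auto
  qed
next
  show "vec.span (rows A) \<subseteq> Sp UNIV (\<lambda>i. A $ i)"
  proof (rule vec.span_minimal)
    show "rows A \<subseteq> Sp UNIV (\<lambda>i. A $ i)"
    proof
      fix x assume "x \<in> rows A"
      then obtain i where x: "x = A $ i" unfolding rows_def row_def by (auto simp: vec_lambda_eta)
      have "Lsum UNIV (\<lambda>i. A $ i) (\<lambda>j. if j = i then 1 else 0) = A $ i"
        unfolding Lsum_def by (simp add: if_distrib[of "\<lambda>c. c *s _"] cong: if_cong)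
      then show "x \<in> Sp UNIV (\<lambda>i. A $ i)" unfolding Sp_def x by (metis rangeI)
    qed
    show "vec.subspace (Sp UNIV (\<lambda>i. A $ i))"
      unfolding vec.subspace_def using zero_in_Sp Sp_add Sp_scale by blast
  qed
qed

lemma card_Sp_rank:
  fixes A :: "'a::{field,finite} ^ 'n2 ^ 'n1"
  shows "card (Sp UNIV (\<lambda>i. A $ i)) = CARD('a) ^ rank A"
  unfolding Sp_rows row_rank_def_gen by (rule card_span_dim)

lemma gamma_lower:
  fixes P :: real assumes P: "P \<ge> 3"
  shows "5 * pi^2 / (4 * P^2) \<le> 1 - cos (2 * pi / P)"
proof -
  define y where "y = pi / P"
  have y0: "0 \<le> y" unfolding y_def using P by simp
  have y3: "y \<le> pi / 3" unfolding y_def using P by (intro divide_left_mono) auto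
  have mac: "\<bar>sin y - (\<Sum>m<3. sin_coeff m * y ^ m)\<bar> \<le> inverse (fact 3) * \<bar>y\<bar> ^ 3"
    by (rule Maclaurin_sin_bound)
  have s3: "(\<Sum>m<3. sin_coeff m * y ^ m) = y"
    by (simp add: sin_coeff_def numeral_3_eq_3)
  have "\<bar>sin y - y\<bar> * 6 \<le> y ^ 3" using mac y0 unfolding s3 by (simp add: fact_numeral)
  moreover have "- (sin y - y) \<le> \<bar>sin y - y\<bar>" by (rule abs_ge_minus_self)
  ultimately have "(y - sin y) * 6 \<le> y^3" by (smt (verit) mult_right_mono)
  then have "sin y \<ge> y - y^3 / 6" by (simp add: field_simps)
  then have s1: "sin y \<ge> y * (1 - y^2/6)" by (simp add: algebra_simps power2_eq_square power3_eq_cube)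
  have "y^2 \<le> (pi/3)^2" using y0 y3 by (intro power_mono) auto
  moreover have "pi^2 \<le> (987/100)"
  proof -
    have "pi \<le> (31416/10000)" using pi_approx by simp
    then have h: "pi^2 \<le> (31416/10000)^2" by (intro power_mono) auto
    have "((31416/10000)::real)^2 \<le> (987/100)" by (simp add: power2_eq_square)
    then show ?thesis using h by linarith
  qed
  ultimately have "y^2 \<le> (987/100) / 9" by (simp add: power_divide)
  then have "1 - y^2/6 \<ge> (817/1000)" by simp
  then have "sin y \<ge> (817/1000) * y" using s1 y0 by (smt (verit) mult_left_mono mult.commute)
  then have "((817/1000) * y)^2 \<le> (sin y)^2" using y0 by (intro power_mono) auto
  moreover have "((817/1000) * y)^2 = (667489/1000000) * y^2" by (simp add: power2_eq_square)
  ultimately have ss: "sin y ^ 2 \<ge> (667489/1000000) * y^2" by linarith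
  have "1 - cos (2 * pi / P) = 2 * sin y ^ 2"
    using cos_double_sin[of y] unfolding y_def by (simp add: mult.assoc)
  moreover have "y^2 = pi^2 / P^2" unfolding y_def by (simp add: power_divide)
  moreover have "5 * pi^2 / (4 * P^2) = (5/4) * (pi^2 / P^2)" by simp
  moreover have "pi^2 / P^2 \<ge> 0" by simp
  ultimately show ?thesis using ss by linarith
qed

lemma gamma_upper:
  fixes P :: real assumes P: "P \<ge> 3"
  shows "1 - cos (2 * pi / P) \<le> 3/2"
proof -
  have "cos (2 * pi / 3) \<le> cos (2 * pi / P)"
  proof (rule cos_monotone_0_pi_le)
    show "0 \<le> 2 * pi / P" using P by simp
    show "2 * pi / P \<le> 2 * pi / 3" using P by (intro divide_left_mono) auto
    show "2 * pi / 3 \<le> pi" by simp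
  qed
  then show ?thesis using cos_120 by simp
qed

lemma numeric_final:
  fixes P c1 c2 :: real and k :: nat
  assumes P: "P \<ge> 3" and c1: "0 < c1" "c1 \<le> 1/2" and c2: "0 < c2" "c2 \<le> 1/2"
  defines "\<gamma> \<equiv> 1 - cos (2 * pi / P)"
  defines "\<rho> \<equiv> sqrt (1 - c2 * \<gamma>)"
  defines "s \<equiv> ln (5 * (P - 1) / c1) / (- ln \<rho>)"
  shows "0 < \<rho>" "\<rho> \<le> 1" "s \<ge> 1" "\<rho> powr s = c1 / (5 * (P - 1))"
    "((1 - c1)^k * (1 + (P - 1) * (\<rho> powr s))^k) powr (1/s)
       \<le> exp (- (c1 * c2 * pi^2 * real k) / (2 * P^2 * ln (2 * exp 1 * P / c1)))"
proof -
  have gl: "5 * pi^2 / (4 * P^2) \<le> \<gamma>" unfolding \<gamma>_def by (rule gamma_lower[OF P])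
  have gu: "\<gamma> \<le> 3/2" unfolding \<gamma>_def by (rule gamma_upper[OF P])
  have g0: "0 < \<gamma>" using gl P by (smt (verit) divide_pos_pos mult_pos_pos pi_gt_zero zero_less_power)
  have cg0: "0 < c2 * \<gamma>" using c2 g0 by simp
  have cg1: "c2 * \<gamma> \<le> 3/4"
  proof -
    have "c2 * \<gamma> \<le> (1/2) * (3/2)" using c2 gu g0 by (intro mult_mono) auto
    then show ?thesis by simp
  qed
  have r2: "1/4 \<le> 1 - c2 * \<gamma>" "1 - c2 * \<gamma> < 1" using cg0 cg1 by auto
  have rho_ge: "1/2 \<le> \<rho>"
  proof -
    have "sqrt (1/4) \<le> \<rho>" unfolding \<rho>_def using r2 by (intro real_sqrt_le_mono) auto
    moreover have "sqrt (1/4) = (1/2 :: real)" by (simp add: real_sqrt_divide)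
    ultimately show ?thesis by simp
  qed
  show rho0: "0 < \<rho>" using rho_ge by simp
  have rho1: "\<rho> < 1" unfolding \<rho>_def using r2 by simp
  then show "\<rho> \<le> 1" by simp
  define l where "l = - ln \<rho>"
  have lnrho: "ln \<rho> = ln (1 - c2 * \<gamma>) / 2" unfolding \<rho>_def using r2 by (simp add: ln_sqrt)
  have "ln (1 - c2 * \<gamma>) \<le> - (c2 * \<gamma>)" using ln_le_minus_one[of "1 - c2 * \<gamma>"] r2 by simp
  then have l_lower: "l \<ge> c2 * \<gamma> / 2" unfolding l_def lnrho by simp
  then have l0: "l > 0" using cg0 by simp
  have l_upper: "l \<le> ln 2"
  proof -
    have "ln (1/2) \<le> ln \<rho>" using rho_ge by (subst ln_le_cancel_iff) auto
    then show ?thesis unfolding l_def by (simp add: ln_div)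
  qed
  define M where "M = 5 * (P - 1) / c1"
  have M20: "M \<ge> 20"
  proof -
    have "5 * (P - 1) \<ge> 10" using P by simp
    moreover have "10 / c1 \<ge> 20" using c1 by (simp add: divide_simps)
    ultimately have "5 * (P - 1) / c1 \<ge> 10 / c1" using c1 by (simp add: divide_right_mono)
    then show ?thesis unfolding M_def using \<open>10 / c1 \<ge> 20\<close> by linarith
  qed
  have lnM: "ln M \<ge> ln 2" using M20 by (subst ln_le_cancel_iff) auto
  have lnM0: "ln M > 0" using M20 by simp
  have s_eq: "s = ln M / l" unfolding s_def M_def l_def ..
  show "s \<ge> 1" unfolding s_eq using l0 l_upper lnM by (simp add: divide_simps)
  have pw: "\<rho> powr s = c1 / (5 * (P - 1))"
  proof -
    have "\<rho> powr s = exp (s * ln \<rho>)" using rho0 by (simp add: powr_def)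
    also have "s * ln \<rho> = - ln M" unfolding s_eq l_def using l0 unfolding l_def by (simp add: divide_simps)
    also have "exp (- ln M) = 1 / M" using M20 by (simp add: exp_minus inverse_eq_divide)
    finally show ?thesis unfolding M_def by simp
  qed
  then show "\<rho> powr s = c1 / (5 * (P - 1))" .
  have base: "(1 - c1) * (1 + (P - 1) * (\<rho> powr s)) \<le> exp (- (4 * c1 / 5))"
  proof -
    have "(1 + (P - 1) * (\<rho> powr s)) = 1 + c1 / 5" unfolding pw using P by (simp add: divide_simps) (simp add: algebra_simps)
    moreover have "1 - c1 \<le> exp (- c1)" using exp_ge_add_one_self[of "- c1"] by simp
    moreover have "1 + c1 / 5 \<le> exp (c1 / 5)" by simp
    ultimately have "(1 - c1) * (1 + (P - 1) * (\<rho> powr s)) \<le> exp (- c1) * exp (c1 / 5)"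
      using c1 by (intro mult_mono) auto
    also have "\<dots> = exp (- (4 * c1 / 5))" by (simp add: exp_add[symmetric])
    finally show ?thesis .
  qed
  have base0: "0 \<le> (1 - c1) * (1 + (P - 1) * (\<rho> powr s))" using c1 P rho0 by simp
  have "(1 - c1)^k * (1 + (P - 1) * (\<rho> powr s))^k = ((1 - c1) * (1 + (P - 1) * (\<rho> powr s)))^k"
    by (simp add: power_mult_distrib)
  also have "\<dots> \<le> exp (- (4 * c1 / 5)) ^ k" using base base0 by (intro power_mono) auto
  also have "\<dots> = exp (- (4 * c1 / 5) * real k)" by (simp add: exp_of_nat_mult[symmetric] mult.commute)
  finally have b1: "(1 - c1)^k * (1 + (P - 1) * (\<rho> powr s))^k \<le> exp (- (4 * c1 / 5) * real k)" .
  have s0: "s > 0" using \<open>s \<ge> 1\<close> by simp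
  have "((1 - c1)^k * (1 + (P - 1) * (\<rho> powr s))^k) powr (1/s) \<le> exp (- (4 * c1 / 5) * real k) powr (1/s)"
    using b1 base0 s0 by (intro powr_mono2) (auto simp: power_mult_distrib[symmetric])
  also have "\<dots> = exp (- (4 * c1 * real k * l) / (5 * ln M))"
    by (simp add: powr_def s_eq mult_ac)
  also have "\<dots> \<le> exp (- (c1 * c2 * pi^2 * real k) / (2 * P^2 * ln (2 * exp 1 * P / c1)))"
  proof -
    have e25: "exp 1 \<ge> (2.5::real)" using exp_lower_Taylor_quadratic[of 1] by simp
    have "M \<le> 2 * exp 1 * P / c1"
    proof -
      have "5 * P \<le> (2 * exp 1) * P" by (rule mult_right_mono) (use e25 P in auto)
      then have "5 * (P - 1) \<le> 2 * exp 1 * P" by simp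
      then show ?thesis unfolding M_def using c1 by (simp add: divide_right_mono)
    qed
    then have lnle: "ln M \<le> ln (2 * exp 1 * P / c1)" using M20 by (subst ln_le_cancel_iff) auto
    have lnpos: "0 < ln (2 * exp 1 * P / c1)" using lnle lnM0 by simp
    have lg: "l \<ge> 5 * pi^2 * c2 / (8 * P^2)"
    proof -
      have "c2 * (5 * pi^2 / (4 * P^2)) \<le> c2 * \<gamma>" using gl c2 by (intro mult_left_mono) auto
      then show ?thesis using l_lower by (simp add: field_simps)
    qed
    have "(c1 * c2 * pi^2 * real k) / (2 * P^2 * ln (2 * exp 1 * P / c1))
        = (4 * c1 * real k * (5 * pi^2 * c2 / (8 * P^2))) / (5 * ln (2 * exp 1 * P / c1))"
      using P by (simp add: field_simps)
    also have "\<dots> \<le> (4 * c1 * real k * l) / (5 * ln (2 * exp 1 * P / c1))"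
      using lg c1 lnpos by (intro divide_right_mono mult_left_mono) auto
    also have "\<dots> \<le> (4 * c1 * real k * l) / (5 * ln M)"
      using lnle lnM0 c1 l0 by (intro divide_left_mono) auto
    finally have "(c1 * c2 * pi^2 * real k) / (2 * P^2 * ln (2 * exp 1 * P / c1)) \<le> (4 * c1 * real k * l) / (5 * ln M)" .
    then show ?thesis by (simp add: minus_divide_left[symmetric])
  qed
  finally show "((1 - c1)^k * (1 + (P - 1) * (\<rho> powr s))^k) powr (1/s)
       \<le> exp (- (c1 * c2 * pi^2 * real k) / (2 * P^2 * ln (2 * exp 1 * P / c1)))" .
qed

lemma PiE_UNIV_UNIV: "PiE UNIV (\<lambda>_. UNIV) = (UNIV :: ('n \<Rightarrow> 'a) set)"
  by (auto simp: PiE_def extensional_def)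

lemma sum_vec_fun:
  fixes h :: "('n::finite \<Rightarrow> 'a::finite) \<Rightarrow> 'b::comm_monoid_add"
  shows "(\<Sum>x\<in>(UNIV :: ('a ^ 'n) set). h (vec_nth x)) = (\<Sum>f\<in>UNIV. h f)"
proof -
  have inj: "inj (vec_nth :: 'a ^ 'n \<Rightarrow> _)" by (intro injI) (simp add: vec_nth_inject)
  have rng: "range (vec_nth :: 'a ^ 'n \<Rightarrow> _) = UNIV"
    by (auto intro!: range_eqI[where x = "vec_lambda _"] simp: vec_lambda_inverse)
  have "(\<Sum>f\<in>range (vec_nth :: 'a ^ 'n \<Rightarrow> _). h f) = (\<Sum>x\<in>UNIV. h (vec_nth x))"
    by (rule sum.reindex[OF inj, unfolded comp_def])
  then show ?thesis using rng by simp
qed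

lemma sum_vec_prod:
  fixes g :: "'n::finite \<Rightarrow> 'a::finite \<Rightarrow> 'b::comm_semiring_1"
  shows "(\<Sum>y\<in>(UNIV :: ('a ^ 'n) set). \<Prod>j\<in>UNIV. g j (y $ j)) = (\<Prod>j\<in>UNIV. \<Sum>a\<in>UNIV. g j a)"
proof -
  have "(\<Sum>y\<in>(UNIV :: ('a ^ 'n) set). \<Prod>j\<in>UNIV. g j (y $ j)) = (\<Sum>f\<in>UNIV. \<Prod>j\<in>UNIV. g j (f j))"
    by (rule sum_vec_fun[of "\<lambda>f. \<Prod>j\<in>UNIV. g j (f j)"])
  also have "\<dots> = (\<Prod>j\<in>UNIV. \<Sum>a\<in>UNIV. g j a)"
    using prod_sum_PiE[of "UNIV :: 'n set" "\<lambda>_. UNIV :: 'a set" g] by (simp add: PiE_UNIV_UNIV)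
  finally show ?thesis .
qed

lemma prod_if_wt: "(\<Prod>j\<in>UNIV. if v $ j = 0 then 1 else (\<rho>::real)) = \<rho> ^ wt UNIV v"
proof -
  have "(\<Prod>j\<in>UNIV. if v $ j = 0 then 1 else \<rho>) = (\<Prod>j\<in>UNIV. if v $ j \<noteq> 0 then \<rho> else 1)"
    by (intro prod.cong) auto
  also have "\<dots> = (\<Prod>j\<in>{j\<in>UNIV. v $ j \<noteq> 0}. \<rho>)" by (rule prod.inter_filter[symmetric]) simp
  also have "\<dots> = \<rho> ^ wt UNIV v" unfolding wt_def by simp
  finally show ?thesis .
qed

lemma proj_UNIV: "proj UNIV v = v"
  unfolding proj_def by (simp add: vec_eq_iff)

theorem proposition2p3:
  fixes D1 D2 :: "'p::prime_card mod_ring \<Rightarrow> real"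
    and c1 c2 :: real
    and A :: "'p mod_ring ^ 'n2::finite ^ 'n1::finite"
    and k :: nat
    and t :: "'p mod_ring"
  assumes "CARD('p) \<ge> 3"
    and "0 < c1" "c1 \<le> 1/2" "0 < c2" "c2 \<le> 1/2"
    and "is_distribution D1" "is_distribution D2"
    and "\<forall>a. D1 a \<le> 1 - c1" "\<forall>a. D2 a \<le> 1 - c2"
    and "rank A = k"
    and "t \<noteq> 0"
  shows "cmod (bias t D1 D2 (bilin_form A)) \<le>
    3 * exp (- (c1 * c2 * pi^2 * real k) /
      (2 * real CARD('p)^2 * ln (2 * exp 1 * real CARD('p) / c1)))"
proof -
  define P where "P = real CARD('p)"
  have P3: "P \<ge> 3" using assms(1) unfolding P_def by simp
  have card2: "CARD('p mod_ring) \<ge> 2" using assms(1) by simp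
  define \<gamma> where "\<gamma> = 1 - cos (2 * pi / P)"
  define \<rho> where "\<rho> = sqrt (1 - c2 * \<gamma>)"
  define s where "s = ln (5 * (P - 1) / c1) / (- ln \<rho>)"
  define u where "u = \<rho> powr s"
  note NF = numeric_final[OF P3 assms(2-5), folded \<gamma>_def, folded \<rho>_def, folded s_def, folded u_def]
  have rho0: "0 < \<rho>" and rho1: "\<rho> \<le> 1" and s1: "s \<ge> 1" and u_eq: "u = c1 / (5 * (P - 1))"
    using NF by auto
  have fin: "((1 - c1)^k * (1 + (P - 1) * u)^k) powr (1/s)
       \<le> exp (- (c1 * c2 * pi^2 * real k) / (2 * P^2 * ln (2 * exp 1 * P / c1)))"
    using NF(5)[of k] .
  have u0: "0 < u" unfolding u_eq using assms(2) P3 by simp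
  have u1: "u \<le> 1"
  proof -
    have "c1 \<le> 5 * (P - 1)" using assms(3) P3 by simp
    then show ?thesis unfolding u_eq using P3 by simp
  qed
  have s0: "s > 0" using s1 by simp

  define r where "r = (\<lambda>i. A $ i)"
  define T where "T = (\<lambda>x::'p mod_ring ^ 'n1. Lsum UNIV r (vec_nth x))"
  define \<phi> where "\<phi> = (\<lambda>\<sigma>::'p mod_ring. \<Sum>a\<in>UNIV. complex_of_real (D2 a) * omega_pow (\<sigma> * a))"
  define W where "W = (\<lambda>x. wt UNIV (T x))"
  have D1nn: "\<And>a. D1 a \<ge> 0" and D1s: "(\<Sum>a\<in>UNIV. D1 a) = 1"
    using assms(6) unfolding is_distribution_def by auto
  have D2nn: "\<And>a. D2 a \<ge> 0" and D2s: "(\<Sum>a\<in>UNIV. D2 a) = 1"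
    using assms(7) unfolding is_distribution_def by auto

  have Tcomp: "(T x) $ j = (\<Sum>i\<in>UNIV. x $ i * A $ i $ j)" for x j
    unfolding T_def Lsum_def r_def by (simp add: sum_component)
  have bil: "bilin_form A x y = (\<Sum>j\<in>UNIV. (T x) $ j * y $ j)" for x y
    unfolding bilin_form_def Tcomp by (subst sum.swap) (simp add: sum_distrib_left sum_distrib_right mult_ac)
  have inner: "(\<Sum>y\<in>UNIV. complex_of_real (prod_dist D1 x * prod_dist D2 y) * omega_pow (t * bilin_form A x y))
        = complex_of_real (prod_dist D1 x) * (\<Prod>j\<in>UNIV. \<phi> (t * (T x) $ j))" for x
  proof -
    have per_y: "complex_of_real (prod_dist D1 x * prod_dist D2 y) * omega_pow (t * bilin_form A x y)
      = complex_of_real (prod_dist D1 x) * (\<Prod>j\<in>UNIV. complex_of_real (D2 (y $ j)) * omega_pow (t * (T x) $ j * y $ j))" for y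
      by (simp add: bil prod_dist_def sum_distrib_left omega_pow_sum prod.distrib mult.assoc)
    have "(\<Sum>y\<in>UNIV. complex_of_real (prod_dist D1 x * prod_dist D2 y) * omega_pow (t * bilin_form A x y))
      = complex_of_real (prod_dist D1 x) * (\<Sum>y\<in>UNIV. \<Prod>j\<in>UNIV. complex_of_real (D2 (y $ j)) * omega_pow (t * (T x) $ j * y $ j))"
      by (simp only: per_y sum_distrib_left)
    also have "(\<Sum>y\<in>UNIV. \<Prod>j\<in>UNIV. complex_of_real (D2 (y $ j)) * omega_pow (t * (T x) $ j * y $ j))
      = (\<Prod>j\<in>UNIV. \<Sum>a\<in>UNIV. complex_of_real (D2 a) * omega_pow (t * (T x) $ j * a))"
      by (rule sum_vec_prod[of "\<lambda>j a. complex_of_real (D2 a) * omega_pow (t * (T x) $ j * a)"])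
    finally show ?thesis unfolding \<phi>_def .
  qed
  have bias_eq: "bias t D1 D2 (bilin_form A) = (\<Sum>x\<in>UNIV. complex_of_real (prod_dist D1 x) * (\<Prod>j\<in>UNIV. \<phi> (t * (T x) $ j)))"
    unfolding bias_def by (simp only: inner)

  have P1nn: "prod_dist D1 x \<ge> 0" for x unfolding prod_dist_def by (intro prod_nonneg) (simp add: D1nn)
  have P1sum: "(\<Sum>x\<in>UNIV. prod_dist D1 x) = 1"
    unfolding prod_dist_def using sum_vec_prod[of "\<lambda>j a. D1 a"] by (simp add: D1s)

  have phi_le: "cmod (\<phi> \<sigma>) \<le> (if \<sigma> = 0 then 1 else \<rho>)" for \<sigma>
  proof (cases "\<sigma> = 0")
    case True
    have "\<phi> 0 = complex_of_real (\<Sum>a\<in>UNIV. D2 a)" unfolding \<phi>_def by simp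
    then show ?thesis using True by (simp add: D2s)
  next
    case False
    have "(cmod (\<phi> \<sigma>))^2 \<le> 1 - c2 * \<gamma>"
      using phi_bound[OF assms(7) assms(9) False] unfolding \<phi>_def \<gamma>_def P_def .
    then have "cmod (\<phi> \<sigma>) \<le> \<rho>" unfolding \<rho>_def by (rule real_le_rsqrt)
    then show ?thesis using False by simp
  qed
  have prod_le: "cmod (\<Prod>j\<in>UNIV. \<phi> (t * (T x) $ j)) \<le> \<rho> ^ W x" for x
  proof -
    have "cmod (\<Prod>j\<in>UNIV. \<phi> (t * (T x) $ j)) = (\<Prod>j\<in>UNIV. cmod (\<phi> (t * (T x) $ j)))"
      by (simp add: prod_norm)
    also have "\<dots> \<le> (\<Prod>j\<in>UNIV. if (T x) $ j = 0 then 1 else \<rho>)"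
    proof (intro prod_mono conjI)
      fix j
      show "0 \<le> cmod (\<phi> (t * T x $ j))" by simp
      show "cmod (\<phi> (t * T x $ j)) \<le> (if T x $ j = 0 then 1 else \<rho>)"
        using phi_le[of "t * T x $ j"] assms(11) by simp
    qed
    also have "\<dots> = \<rho> ^ W x" unfolding W_def by (rule prod_if_wt)
    finally show ?thesis .
  qed
  have stepB: "cmod (bias t D1 D2 (bilin_form A)) \<le> (\<Sum>x\<in>UNIV. prod_dist D1 x * \<rho> ^ W x)"
  proof -
    have "cmod (bias t D1 D2 (bilin_form A)) \<le> (\<Sum>x\<in>UNIV. cmod (complex_of_real (prod_dist D1 x) * (\<Prod>j\<in>UNIV. \<phi> (t * (T x) $ j))))"
      unfolding bias_eq by (rule norm_sum)
    also have "\<dots> \<le> (\<Sum>x\<in>UNIV. prod_dist D1 x * \<rho> ^ W x)"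
    proof (intro sum_mono)
      fix x
      have "cmod (complex_of_real (prod_dist D1 x) * (\<Prod>j\<in>UNIV. \<phi> (t * (T x) $ j)))
          = prod_dist D1 x * cmod (\<Prod>j\<in>UNIV. \<phi> (t * (T x) $ j))"
        using P1nn[of x] by (simp add: norm_mult)
      also have "\<dots> \<le> prod_dist D1 x * \<rho> ^ W x"
        by (intro mult_left_mono prod_le P1nn)
      finally show "cmod (complex_of_real (prod_dist D1 x) * (\<Prod>j\<in>UNIV. \<phi> (t * (T x) $ j)))
          \<le> prod_dist D1 x * \<rho> ^ W x" .
    qed
    finally show ?thesis .
  qed

  have pw: "(\<rho> ^ n) powr s = u ^ n" for n
  proof -
    have "(\<rho> ^ n) powr s = (\<rho> powr real n) powr s" using rho0 by (simp add: powr_realpow)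
    also have "\<dots> = (\<rho> powr s) powr real n" by (simp add: powr_powr mult.commute)
    also have "\<dots> = u ^ n" unfolding u_def[symmetric] using u0 by (simp add: powr_realpow)
    finally show ?thesis .
  qed
  have stepC: "(\<Sum>x\<in>UNIV. prod_dist D1 x * \<rho> ^ W x) \<le> (\<Sum>x\<in>UNIV. prod_dist D1 x * u ^ W x) powr (1/s)"
  proof -
    have "(\<lambda>z. z powr s) (\<Sum>x\<in>UNIV. prod_dist D1 x *\<^sub>R \<rho> ^ W x) \<le> (\<Sum>x\<in>UNIV. prod_dist D1 x * (\<lambda>z. z powr s) (\<rho> ^ W x))"
      by (rule convex_on_sum[where C="{0<..}"]) (auto simp: powr_convex[OF s1] P1sum P1nn rho0)
    then have J: "(\<Sum>x\<in>UNIV. prod_dist D1 x * \<rho> ^ W x) powr s \<le> (\<Sum>x\<in>UNIV. prod_dist D1 x * u ^ W x)"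
      by (simp add: pw)
    have nn: "0 \<le> (\<Sum>x\<in>UNIV. prod_dist D1 x * \<rho> ^ W x)"
      using P1nn rho0 by (intro sum_nonneg mult_nonneg_nonneg) auto
    have "(\<Sum>x\<in>UNIV. prod_dist D1 x * \<rho> ^ W x) = ((\<Sum>x\<in>UNIV. prod_dist D1 x * \<rho> ^ W x) powr s) powr (1/s)"
      using s0 nn by (simp add: powr_powr powr_one)
    also have "\<dots> \<le> (\<Sum>x\<in>UNIV. prod_dist D1 x * u ^ W x) powr (1/s)"
      using J s0 by (intro powr_mono2) auto
    finally show ?thesis .
  qed

  have cardSp: "card (Sp UNIV r) = CARD('p mod_ring) ^ k"
    unfolding r_def using card_Sp_rank[of A] assms(10) by simp
  have stepD: "(\<Sum>x\<in>UNIV. prod_dist D1 x * u ^ W x) \<le> (1 - c1)^k * (1 + (P - 1) * u)^k"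
  proof -
    have eq1: "(\<Sum>x\<in>UNIV. prod_dist D1 x * u ^ W x) = (\<Sum>f\<in>UNIV. (\<Prod>i\<in>UNIV. D1 (f i)) * u ^ wt UNIV (Lsum UNIV r f))"
      unfolding W_def T_def prod_dist_def
      by (rule sum_vec_fun[of "\<lambda>f. (\<Prod>i\<in>UNIV. D1 (f i)) * u ^ wt UNIV (Lsum UNIV r f)"])
    have eq2: "(\<Sum>v\<in>Sp UNIV r. u ^ wt UNIV v * Pr D1 UNIV r v) = (\<Sum>f\<in>UNIV. (\<Prod>i\<in>UNIV. D1 (f i)) * u ^ wt UNIV (Lsum UNIV r f))"
    proof -
      have "(\<Sum>v\<in>Sp UNIV r. u ^ wt UNIV v * Pr D1 UNIV r v)
          = (\<Sum>v\<in>Sp UNIV r. \<Sum>f\<in>UNIV. (\<Prod>i\<in>UNIV. D1 (f i)) * (if Lsum UNIV r f = v then u ^ wt UNIV v else 0))"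
        unfolding Pr_def PiE_UNIV_UNIV by (intro sum.cong refl) (auto simp: sum_distrib_left intro!: sum.cong)
      also have "\<dots> = (\<Sum>f\<in>UNIV. \<Sum>v\<in>Sp UNIV r. (\<Prod>i\<in>UNIV. D1 (f i)) * (if Lsum UNIV r f = v then u ^ wt UNIV v else 0))"
        by (rule sum.swap)
      also have "\<dots> = (\<Sum>f\<in>UNIV. (\<Prod>i\<in>UNIV. D1 (f i)) * u ^ wt UNIV (Lsum UNIV r f))"
      proof (intro sum.cong refl)
        fix f
        have mem: "Lsum UNIV r f \<in> Sp UNIV r" unfolding Sp_def by simp
        show "(\<Sum>v\<in>Sp UNIV r. (\<Prod>i\<in>UNIV. D1 (f i)) * (if Lsum UNIV r f = v then u ^ wt UNIV v else 0))
            = (\<Prod>i\<in>UNIV. D1 (f i)) * u ^ wt UNIV (Lsum UNIV r f)"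
          using mem by (simp add: sum_distrib_left[symmetric] sum.delta)
      qed
      finally show ?thesis .
    qed
    have "(\<Sum>v\<in>Sp UNIV r. u ^ wt UNIV v * Pr D1 UNIV r v) \<le> (\<Sum>v\<in>Sp UNIV r. u ^ wt UNIV v * (1 - c1)^k)"
    proof (intro sum_mono mult_left_mono)
      fix v
      show "Pr D1 UNIV r v \<le> (1 - c1)^k"
        by (rule fiber_bound[OF _ _ D1s assms(8) card2 cardSp]) (auto simp: D1nn)
      show "0 \<le> u ^ wt UNIV v" using u0 by simp
    qed
    also have "\<dots> = (1 - c1)^k * (\<Sum>v\<in>Sp UNIV r. u ^ wt UNIV v)"
      by (simp add: sum_distrib_right[symmetric] mult.commute)
    also have "\<dots> \<le> (1 - c1)^k * (1 + (P - 1) * u)^k"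
    proof (rule mult_left_mono)
      have "(\<Sum>w\<in>proj UNIV ` Sp UNIV r. u ^ wt UNIV w) \<le> (1 + (real CARD('p mod_ring) - 1) * u) ^ k"
        by (rule weight_enum[OF zero_in_Sp Sp_add Sp_scale _ u1 card2])
           (use u0 cardSp in \<open>auto simp: proj_UNIV\<close>)
      then show "(\<Sum>v\<in>Sp UNIV r. u ^ wt UNIV v) \<le> (1 + (P - 1) * u)^k"
        by (simp add: proj_UNIV P_def)
      show "0 \<le> (1 - c1)^k" using assms(3) by simp
    qed
    finally show ?thesis using eq1 eq2 by simp
  qed

  have "cmod (bias t D1 D2 (bilin_form A)) \<le> (\<Sum>x\<in>UNIV. prod_dist D1 x * u ^ W x) powr (1/s)"
    using stepB stepC by linarith
  also have "\<dots> \<le> ((1 - c1)^k * (1 + (P - 1) * u)^k) powr (1/s)"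
    using stepD s0 P1nn u0 by (intro powr_mono2 sum_nonneg mult_nonneg_nonneg) auto
  also have "\<dots> \<le> exp (- (c1 * c2 * pi^2 * real k) / (2 * P^2 * ln (2 * exp 1 * P / c1)))"
    by (rule fin)
  also have "\<dots> \<le> 3 * exp (- (c1 * c2 * pi^2 * real k) / (2 * P^2 * ln (2 * exp 1 * P / c1)))"
    by simp
  finally show ?thesis unfolding P_def .
qed

end
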